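(* Let $\mathbf{G}=(\mathcal{V},\mathcal{E})$ be a strongly connected directed graph on $\mathcal{V}=\{1,\dots,m\}$ with diameter $\delta(\mathbf{G})$, let $a>0$, and let each node $i$ hold a private input $x_i\in[0,a)$. If the TITAN algorithm (described in the context) is run with parameters $T\ge\delta(\mathbf{G})$ and a positive integer $k\le m$, then it terminates after $T\lceil m/k\rceil$ rounds of the recovery phase and every node outputs exactly $\bar{x}=\frac{1}{m}\sum_{i=1}^m x_i$.
   Context: For $a'>0$ and real $y$, $\mathrm{mod}(y,a')=y-pa'$, where $p$ is the unique integer with $y-pa'\in[0,a')$. $\mathcal{N}_i^{in}$ and $\mathcal{N}_i^{out}$ denote the in- and out-neighbors of node $i$; $\delta(\mathbf{G})$ is the directed diameter. Communication is synchronous and reliable. TITAN algorithm: (1) Obfuscation: each node $i$ draws, for every out-neighbor $j$, an independent random number $r_{ij}$ uniform on $[0,ma)$ and sends it to $j$; node $i$ computes $t_i=\mathrm{mod}\big(\sum_{j\in\mathcal{N}_i^{in}} r_{ji}-\sum_{j\in\mathcal{N}_i^{out}} r_{ij},\, ma\big)$ and the perturbed input $\tilde{x}_i=\mathrm{mod}(x_i+t_i,ma)$. (2) Distributed recovery: the nodes run the Top-$k$ consensus primitive $\lceil m/k\rceil$ times in succession on the pairs $(\tilde{x}_i,i)$, each run using $T$ rounds and excluding the pairs already recovered in previous runs; each node stores the recovered pairs. The Top-$k$ primitive: each node keeps length-$k$ lists $L_i,\ell_i$ of values and identifiers, initialized with its own (not yet recovered) pair and empty entries; in each of $T$ rounds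 every node sends its lists to its out-neighbors and replaces its lists by the (up to) $k$ largest value–identifier pairs among its own and received ones, in decreasing order of value with ties broken in favor of larger identifier. (3) Output: each node $i$, having recovered values $r_i[1],\dots,r_i[m]$, outputs $\frac{1}{m}\mathrm{mod}\big(\sum_{l=1}^m r_i[l],ma\big)$. *)

theory Defs
  imports Complex_Main "HOL-Library.Product_Lexorder"
begin

definition rmod :: "real \<Rightarrow> real \<Rightarrow> real" where
  "rmod y a' = y - a' * of_int \<lfloor>y / a'\<rfloor>"

definition in_nbrs :: "(nat \<times> nat) set \<Rightarrow> nat \<Rightarrow> nat set" where
  "in_nbrs E i = {j. (j, i) \<in> E}"

definition out_nbrs :: "(nat \<times> nat) set \<Rightarrow> nat \<Rightarrow> nat set" where
  "out_nbrs E i = {j. (i, j) \<in> E}"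

definition strongly_connected :: "nat set \<Rightarrow> (nat \<times> nat) set \<Rightarrow> bool" where
  "strongly_connected V E \<longleftrightarrow> (\<forall>i\<in>V. \<forall>j\<in>V. (i, j) \<in> E\<^sup>*)"

definition dist_dir :: "(nat \<times> nat) set \<Rightarrow> nat \<Rightarrow> nat \<Rightarrow> nat" where
  "dist_dir E i j = (LEAST n. (i, j) \<in> E ^^ n)"

definition diameter :: "nat set \<Rightarrow> (nat \<times> nat) set \<Rightarrow> nat" where
  "diameter V E = Max {dist_dir E i j | i j. i \<in> V \<and> j \<in> V}"

text \<open>The (up to) k largest pairs, in the lexicographic order on (value, identifier):
  larger value first, ties broken in favour of the larger identifier.\<close>
definition topk :: "nat \<Rightarrow> (real \<times> nat) set \<Rightarrow> (real \<times> nat) set" where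
  "topk k S = set (take k (rev (sorted_list_of_set S)))"

text \<open>State of the Top-k primitive after t rounds at node i; R j is the set of
  pairs already recovered by node j in previous runs (excluded).\<close>
fun topk_state :: "(nat \<times> nat) set \<Rightarrow> nat \<Rightarrow> (nat \<Rightarrow> real) \<Rightarrow> (nat \<Rightarrow> (real \<times> nat) set)
                    \<Rightarrow> nat \<Rightarrow> nat \<Rightarrow> (real \<times> nat) set" where
  "topk_state E k xt R 0 i = {(xt i, i)} - R i"
| "topk_state E k xt R (Suc t) i =
     topk k ((topk_state E k xt R t i \<union> (\<Union>j\<in>in_nbrs E i. topk_state E k xt R t j)) - R i)"

fun recovered :: "(nat \<times> nat) set \<Rightarrow> nat \<Rightarrow> nat \<Rightarrow> (nat \<Rightarrow> real) \<Rightarrow> nat \<Rightarrow> nat \<Rightarrow> (real \<times> nat) set" where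
  "recovered E k T xt 0 i = {}"
| "recovered E k T xt (Suc n) i =
     recovered E k T xt n i \<union> topk_state E k xt (recovered E k T xt n) T i"

text \<open>Obfuscation phase: r i j is the random number node i sends to out-neighbour j.\<close>
definition perturbed :: "nat \<Rightarrow> real \<Rightarrow> (nat \<times> nat) set \<Rightarrow> (nat \<Rightarrow> nat \<Rightarrow> real)
                         \<Rightarrow> (nat \<Rightarrow> real) \<Rightarrow> nat \<Rightarrow> real" where
  "perturbed m a E r x i =
     rmod (x i + rmod ((\<Sum>j\<in>in_nbrs E i. r j i) - (\<Sum>j\<in>out_nbrs E i. r i j)) (real m * a))
          (real m * a)"

definition titan_output :: "nat \<Rightarrow> real \<Rightarrow> (nat \<times> nat) set \<Rightarrow> nat \<Rightarrow> nat
                            \<Rightarrow> (nat \<Rightarrow> nat \<Rightarrow> real) \<Rightarrow> (nat \<Rightarrow> real) \<Rightarrow> nat \<Rightarrow> real" where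
  "titan_output m a E k T r x i =
     (1 / real m) * rmod (\<Sum>p\<in>recovered E k T (perturbed m a E r x) (nat \<lceil>real m / real k\<rceil>) i. fst p)
                          (real m * a)"

end

theory Submission
  imports Defs
begin


lemma sorted_gt_nth:
  fixes xs :: "'a::linorder list"
  assumes s: "sorted_wrt (>) xs" and p: "p < length xs"
  shows "{y \<in> set xs. xs!p < y} = (!) xs ` {..<p}"
proof (intro set_eqI iffI)
  fix y assume "y \<in> {y \<in> set xs. xs!p < y}"
  then have "y \<in> set xs" "xs!p < y" by auto
  then obtain q where q: "q < length xs" "y = xs!q" by (auto simp: in_set_conv_nth)
  have "q < p"
  proof (rule ccontr)
    assume "\<not> q < p"
    then have "q = p \<or> p < q" by auto
    then show False
    proof
      assume "q = p" then show False using \<open>xs!p < y\<close> q by simp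
    next
      assume "p < q" then have "xs!q < xs!p" using s q sorted_wrt_nth_less by fastforce
      then show False using \<open>xs!p < y\<close> q by simp
    qed
  qed
  then show "y \<in> (!) xs ` {..<p}" using q by auto
next
  fix y assume "y \<in> (!) xs ` {..<p}"
  then obtain q where q: "q < p" "y = xs!q" by auto
  have "y \<in> set xs" using p q by auto
  moreover have "xs!p < y" using s p q sorted_wrt_nth_less by fastforce
  ultimately show "y \<in> {y \<in> set xs. xs!p < y}" by simp
qed

lemma topk_mem:
  assumes fin: "finite S"
  shows "x \<in> topk k S \<longleftrightarrow> x \<in> S \<and> card {y\<in>S. x<y} < k"
proof -
  define xs where "xs = rev (sorted_list_of_set S)"
  have s: "sorted_wrt (>) xs" unfolding xs_def
    using strict_sorted_list_of_set[of S] by (simp add: sorted_wrt_rev)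
  have d: "distinct xs" unfolding xs_def by simp
  have st: "set xs = S" unfolding xs_def using fin by simp
  have card_p: "card {y\<in>S. xs!p < y} = p" if "p < length xs" for p
  proof -
    have "card {y\<in>S. xs!p < y} = card ((!) xs ` {..<p})"
      using sorted_gt_nth[OF s that] st by simp
    also have "\<dots> = p"
      using d that by (subst card_image) (auto intro: inj_on_subset[OF inj_on_nth[OF d]])
    finally show ?thesis .
  qed
  show ?thesis
  proof
    assume "x \<in> topk k S"
    then obtain p where p: "p < length (take k xs)" "x = take k xs ! p"
      unfolding topk_def xs_def[symmetric] by (auto simp: in_set_conv_nth)
    then have "x = xs!p" "p < k" "p < length xs" by auto
    then show "x \<in> S \<and> card {y\<in>S. x<y} < k" using card_p st by auto
  next
    assume a: "x \<in> S \<and> card {y\<in>S. x<y} < k"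
    then obtain p where p: "p < length xs" "x = xs!p" using st by (auto simp: in_set_conv_nth)
    then have "p < k" using a card_p by auto
    then have "take k xs ! p = x" "p < length (take k xs)" using p by auto
    then have "x \<in> set (take k xs)" using nth_mem by metis
    then show "x \<in> topk k S" unfolding topk_def xs_def[symmetric] .
  qed
qed

lemma topk_card:
  assumes "finite S" shows "card (topk k S) = min k (card S)"
proof -
  have "card (topk k S) = length (take k (rev (sorted_list_of_set S)))"
    unfolding topk_def by (rule distinct_card) simp
  then show ?thesis by simp
qed

lemma topk_subset: "finite S \<Longrightarrow> topk k S \<subseteq> S"
  using topk_mem by auto

lemma topk_finite: "finite (topk k S)"
  unfolding topk_def by simp



lemma topk_merge:
  assumes fJ: "finite J" and fA: "\<And>j. j \<in> J \<Longrightarrow> finite (A j)"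
  shows "topk k (\<Union>j\<in>J. topk k (A j)) = topk k (\<Union>j\<in>J. A j)"
proof -
  define U where "U = (\<Union>j\<in>J. topk k (A j))"
  define B where "B = (\<Union>j\<in>J. A j)"
  have fB: "finite B" unfolding B_def using fJ fA by blast
  have UB: "U \<subseteq> B" unfolding U_def B_def using topk_subset fA by blast
  have fU: "finite U" using UB fB finite_subset by blast
  have sup: "topk k B \<subseteq> U"
  proof
    fix x assume "x \<in> topk k B"
    then have x: "x \<in> B" "card {y\<in>B. x<y} < k" using topk_mem[OF fB] by auto
    then obtain j where j: "j \<in> J" "x \<in> A j" unfolding B_def by auto
    have sub: "{y\<in>A j. x<y} \<subseteq> {y\<in>B. x<y}" using j unfolding B_def by blast
    have "card {y\<in>A j. x<y} \<le> card {y\<in>B. x<y}"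
      by (rule card_mono[OF _ sub]) (use fB in simp)
    then have "x \<in> topk k (A j)" using topk_mem[OF fA[OF j(1)]] j x by auto
    then show "x \<in> U" unfolding U_def using j by blast
  qed
  show ?thesis unfolding U_def[symmetric] B_def[symmetric]
  proof (intro set_eqI iffI)
    fix x assume "x \<in> topk k U"
    then have x: "x \<in> U" "card {y\<in>U. x<y} < k" using topk_mem[OF fU] by auto
    show "x \<in> topk k B"
    proof (rule ccontr)
      assume "x \<notin> topk k B"
      then have r: "card {y\<in>B. x<y} \<ge> k" using topk_mem[OF fB] x UB by auto
      have "card {y\<in>B. x<y} \<le> card B" by (rule card_mono[OF fB]) blast
      then have "card B \<ge> k" using r by linarith
      then have ck: "card (topk k B) = k" using topk_card[OF fB] by simp
      have tb: "topk k B \<subseteq> {y\<in>U. x<y}"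
      proof
        fix y assume y: "y \<in> topk k B"
        then have yB: "y \<in> B" "card {z\<in>B. y<z} < k" using topk_mem[OF fB] by auto
        have "x < y"
        proof (rule ccontr)
          assume "\<not> x < y"
          then have "{z\<in>B. x<z} \<subseteq> {z\<in>B. y<z}" by auto
          then have "card {z\<in>B. x<z} \<le> card {z\<in>B. y<z}" using fB by (intro card_mono) auto
          then show False using r yB by linarith
        qed
        then show "y \<in> {y\<in>U. x<y}" using sup y by blast
      qed
      have "finite {y\<in>U. x<y}" using fU by simp
      then have "card (topk k B) \<le> card {y\<in>U. x<y}" using tb by (rule card_mono)
      then show False using x ck by linarith
    qed
  next
    fix x assume "x \<in> topk k B"
    then have x: "x \<in> B" "card {y\<in>B. x<y} < k" using topk_mem[OF fB] by auto
    have "x \<in> U" using sup \<open>x \<in> topk k B\<close> by blast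
    moreover have "card {y\<in>U. x<y} \<le> card {y\<in>B. x<y}"
      using UB fB by (intro card_mono) auto
    ultimately show "x \<in> topk k U" using topk_mem[OF fU] x by auto
  qed
qed



definition reachN :: "(nat \<times> nat) set \<Rightarrow> nat \<Rightarrow> nat \<Rightarrow> nat set" where
  "reachN E t i = {j. \<exists>n\<le>t. (j, i) \<in> E ^^ n}"

lemma reachN_0: "reachN E 0 i = {i}"
  unfolding reachN_def by auto

lemma reachN_Suc: "reachN E (Suc t) i = reachN E t i \<union> (\<Union>l\<in>in_nbrs E i. reachN E t l)"
proof (intro set_eqI iffI)
  fix j assume "j \<in> reachN E (Suc t) i"
  then obtain n where n: "n \<le> Suc t" "(j, i) \<in> E ^^ n" unfolding reachN_def by auto
  show "j \<in> reachN E t i \<union> (\<Union>l\<in>in_nbrs E i. reachN E t l)"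
  proof (cases n)
    case 0 then show ?thesis using n unfolding reachN_def by auto
  next
    case (Suc n')
    then obtain l where "(j, l) \<in> E ^^ n'" "(l, i) \<in> E" using n(2) by auto
    then show ?thesis using n(1) Suc unfolding reachN_def in_nbrs_def by auto
  qed
next
  fix j assume "j \<in> reachN E t i \<union> (\<Union>l\<in>in_nbrs E i. reachN E t l)"
  then show "j \<in> reachN E (Suc t) i"
  proof
    assume "j \<in> reachN E t i" then show ?thesis unfolding reachN_def using le_SucI by blast
  next
    assume "j \<in> (\<Union>l\<in>in_nbrs E i. reachN E t l)"
    then obtain l n where "(l, i) \<in> E" "n \<le> t" "(j, l) \<in> E ^^ n"
      unfolding reachN_def in_nbrs_def by auto
    then have "(j, i) \<in> E ^^ Suc n" by auto
    then show ?thesis using \<open>n \<le> t\<close> unfolding reachN_def by (intro CollectI exI[of _ "Suc n"]) auto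
  qed
qed

lemma reachN_sub:
  assumes "E \<subseteq> V \<times> V" "i \<in> V" shows "reachN E t i \<subseteq> V"
proof
  fix j assume "j \<in> reachN E t i"
  then obtain n where n: "(j, i) \<in> E ^^ n" unfolding reachN_def by auto
  show "j \<in> V"
  proof (cases n)
    case 0 then have "j = i" using n by simp
    then show ?thesis using assms(2) by simp
  next
    case (Suc n')
    then obtain l where "(j, l) \<in> E" using n relpow_Suc_D2 by metis
    then show ?thesis using assms(1) by blast
  qed
qed

lemma in_nbrs_sub: "E \<subseteq> V \<times> V \<Longrightarrow> in_nbrs E i \<subseteq> V"
  unfolding in_nbrs_def by auto

lemma topk_small: "finite S \<Longrightarrow> card S \<le> k \<Longrightarrow> topk k S = S"
  using topk_subset[of S k] topk_card[of S k] card_subset_eq[of S "topk k S"] by auto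

lemma state_eq:
  assumes E: "E \<subseteq> V \<times> V" and fV: "finite V" and k: "0 < k"
    and R: "\<forall>j\<in>V. R j = R0"
  shows "i \<in> V \<Longrightarrow> topk_state E k xt R t i = topk k ((\<lambda>j. (xt j, j)) ` reachN E t i - R0)"
proof (induction t arbitrary: i)
  case 0
  have "card ({(xt i, i)} - R0) \<le> 1" by (rule order_trans[OF card_mono[of "{(xt i, i)}"]]) auto
  then have "topk k ({(xt i, i)} - R0) = {(xt i, i)} - R0" using k by (intro topk_small) auto
  then show ?case using 0 R by (simp add: reachN_0)
next
  case (Suc t)
  define f where "f = (\<lambda>j. (xt j, j))"
  define A where "A = (\<lambda>j. f ` reachN E t j - R0)"
  have fA: "finite (A j)" if "j \<in> insert i (in_nbrs E i)" for j
  proof -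
    have "j \<in> V" using that Suc.prems in_nbrs_sub[OF E] by auto
    then have "finite (reachN E t j)" using finite_subset[OF reachN_sub[OF E] fV] by blast
    then show ?thesis unfolding A_def by simp
  qed
  have fJ: "finite (insert i (in_nbrs E i))" using finite_subset[OF in_nbrs_sub[OF E] fV] by blast
  have IH: "topk_state E k xt R t j = topk k (A j)" if "j \<in> insert i (in_nbrs E i)" for j
  proof -
    have "j \<in> V" using that Suc.prems in_nbrs_sub[OF E] by auto
    then show ?thesis using Suc.IH unfolding A_def f_def by blast
  qed
  have "topk_state E k xt R (Suc t) i =
     topk k ((topk_state E k xt R t i \<union> (\<Union>j\<in>in_nbrs E i. topk_state E k xt R t j)) - R0)"
    using R Suc.prems by simp
  also have "(topk_state E k xt R t i \<union> (\<Union>j\<in>in_nbrs E i. topk_state E k xt R t j)) - R0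
      = (\<Union>j\<in>insert i (in_nbrs E i). topk k (A j))"
  proof -
    have "(topk_state E k xt R t i \<union> (\<Union>j\<in>in_nbrs E i. topk_state E k xt R t j))
      = (\<Union>j\<in>insert i (in_nbrs E i). topk k (A j))" using IH by auto
    moreover have "(\<Union>j\<in>insert i (in_nbrs E i). topk k (A j)) \<inter> R0 = {}"
      using topk_subset fA unfolding A_def by blast
    ultimately show ?thesis by blast
  qed
  also have "topk k (\<Union>j\<in>insert i (in_nbrs E i). topk k (A j)) = topk k (\<Union>j\<in>insert i (in_nbrs E i). A j)"
    by (rule topk_merge[OF fJ fA])
  also have "(\<Union>j\<in>insert i (in_nbrs E i). A j) = f ` reachN E (Suc t) i - R0"
    unfolding A_def reachN_Suc by blast
  finally show ?case unfolding f_def .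
qed




fun Qrec :: "nat \<Rightarrow> (real \<times> nat) set \<Rightarrow> nat \<Rightarrow> (real \<times> nat) set" where
  "Qrec k P 0 = {}"
| "Qrec k P (Suc n) = Qrec k P n \<union> topk k (P - Qrec k P n)"

lemma Qrec_props:
  assumes "finite P"
  shows "Qrec k P n \<subseteq> P \<and> card (Qrec k P n) = min (n * k) (card P)"
proof (induction n)
  case 0 then show ?case by simp
next
  case (Suc n)
  let ?Q = "Qrec k P n"
  have fQ: "finite ?Q" using Suc.IH assms finite_subset by metis
  have fD: "finite (P - ?Q)" using assms by simp
  have sub: "topk k (P - ?Q) \<subseteq> P - ?Q" by (rule topk_subset[OF fD])
  have "card (Qrec k P (Suc n)) = card ?Q + card (topk k (P - ?Q))"
  proof -
    have "?Q \<inter> topk k (P - ?Q) = {}" using sub by blast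
    then show ?thesis using card_Un_disjoint[OF fQ topk_finite] by simp
  qed
  also have "card (topk k (P - ?Q)) = min k (card P - card ?Q)"
    using topk_card[OF fD] card_Diff_subset[OF fQ] Suc.IH by simp
  finally have cS: "card (Qrec k P (Suc n)) = card ?Q + min k (card P - card ?Q)" .
  then have "card (Qrec k P (Suc n)) = min (Suc n * k) (card P)"
  proof -
    have ar: "min x c + min k (c - min x c) = min (x + k) c" for x c :: nat by (simp add: min_def; arith)
    show ?thesis using cS Suc.IH ar[of "n * k" "card P"] by (simp add: add.commute)
  qed
  moreover have "Qrec k P (Suc n) \<subseteq> P" using Suc.IH sub by auto
  ultimately show ?case by simp
qed

lemma recovered_eq:
  assumes E: "E \<subseteq> V \<times> V" and fV: "finite V" and k: "0 < k"
    and reach: "\<forall>i\<in>V. reachN E T i = V"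
  shows "\<forall>i\<in>V. recovered E k T xt n i = Qrec k ((\<lambda>j. (xt j, j)) ` V) n"
proof (induction n)
  case 0 then show ?case by simp
next
  case (Suc n)
  show ?case
  proof
    fix i assume i: "i \<in> V"
    have "topk_state E k xt (recovered E k T xt n) T i
        = topk k ((\<lambda>j. (xt j, j)) ` reachN E T i - Qrec k ((\<lambda>j. (xt j, j)) ` V) n)"
      by (rule state_eq[OF E fV k Suc.IH i])
    then show "recovered E k T xt (Suc n) i = Qrec k ((\<lambda>j. (xt j, j)) ` V) (Suc n)"
      using Suc.IH i reach by simp
  qed
qed

lemma rmod_eq:
  assumes c: "c > 0" and s: "0 \<le> s" "s < c" and y: "y = s + c * of_int z"
  shows "rmod y c = s"
proof -
  have "y / c = s / c + of_int z" using y c by (simp add: field_simps)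
  moreover have "0 \<le> s / c" "s / c < 1" using s c by auto
  ultimately have "\<lfloor>y / c\<rfloor> = z" by (simp add: floor_eq_iff)
  then show ?thesis unfolding rmod_def using y by simp
qed

lemma rmod_decomp: "\<exists>z. rmod y c = y + c * of_int z"
  unfolding rmod_def by (intro exI[of _ "- \<lfloor>y / c\<rfloor>"]) simp

lemma flow_zero:
  fixes r :: "nat \<Rightarrow> nat \<Rightarrow> real"
  assumes E: "E \<subseteq> V \<times> V" and fV: "finite V"
  shows "(\<Sum>i\<in>V. (\<Sum>j\<in>in_nbrs E i. r j i) - (\<Sum>j\<in>out_nbrs E i. r i j)) = 0"
proof -
  have inb: "in_nbrs E i = {j\<in>V. (j, i) \<in> E}" for i using E unfolding in_nbrs_def by auto
  have outb: "out_nbrs E i = {j\<in>V. (i, j) \<in> E}" for i using E unfolding out_nbrs_def by auto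
  have "(\<Sum>i\<in>V. \<Sum>j\<in>in_nbrs E i. r j i) = (\<Sum>i\<in>V. \<Sum>j\<in>V. if (j, i) \<in> E then r j i else 0)"
    unfolding inb using fV by (simp add: sum.inter_filter)
  also have "\<dots> = (\<Sum>j\<in>V. \<Sum>i\<in>V. if (j, i) \<in> E then r j i else 0)"
    by (rule sum.swap)
  also have "\<dots> = (\<Sum>j\<in>V. \<Sum>i\<in>out_nbrs E j. r j i)"
    unfolding outb using fV by (simp add: sum.inter_filter)
  finally show ?thesis by (simp add: sum_subtractf)
qed




theorem theorem2:
  fixes m k T :: nat and a :: real and E :: "(nat \<times> nat) set"
    and x :: "nat \<Rightarrow> real" and r :: "nat \<Rightarrow> nat \<Rightarrow> real"
  assumes "E \<subseteq> {1..m} \<times> {1..m}"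
    and "strongly_connected {1..m} E"
    and "a > 0"
    and "\<forall>i\<in>{1..m}. 0 \<le> x i \<and> x i < a"
    and "\<forall>(i, j)\<in>E. 0 \<le> r i j \<and> r i j < real m * a"
    and "0 < k" and "k \<le> m"
    and "diameter {1..m} E \<le> T"
  shows "\<forall>i\<in>{1..m}. titan_output m a E k T r x i = (\<Sum>j\<in>{1..m}. x j) / real m"
proof
  define V where "V = {1..m}"
  have E: "E \<subseteq> V \<times> V" using assms(1) V_def by simp
  have fV: "finite V" unfolding V_def by simp
  have cV: "card V = m" unfolding V_def by simp
  have k: "0 < k" by fact
  have m1: "m \<ge> 1" using assms(6,7) by simp
  define c where "c = real m * a"
  have c: "c > 0" unfolding c_def using m1 assms(3) by simp
  define xt where "xt = perturbed m a E r x"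
  define f where "f = (\<lambda>j. (xt j, j))"
  define P where "P = f ` V"
  have injf: "inj_on f V" unfolding f_def by (auto intro: inj_onI)
  have cP: "card P = m" unfolding P_def using card_image[OF injf] cV by simp
  have fP: "finite P" unfolding P_def using fV by simp
  have reach: "\<forall>i\<in>V. reachN E T i = V"
  proof
    fix i assume i: "i \<in> V"
    show "reachN E T i = V"
    proof
      show "reachN E T i \<subseteq> V" by (rule reachN_sub[OF E i])
      show "V \<subseteq> reachN E T i"
      proof
        fix j assume j: "j \<in> V"
        have "(j, i) \<in> E\<^sup>*" using assms(2) i j unfolding strongly_connected_def V_def by blast
        then obtain n where "(j, i) \<in> E ^^ n" using rtrancl_power by blast
        then have d: "(j, i) \<in> E ^^ dist_dir E j i" unfolding dist_dir_def by (rule LeastI)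
        have fin: "finite {dist_dir E i j | i j. i \<in> V \<and> j \<in> V}"
        proof -
          have "{dist_dir E i j | i j. i \<in> V \<and> j \<in> V} = (\<lambda>(i, j). dist_dir E i j) ` (V \<times> V)"
            by auto
          then show ?thesis using fV by simp
        qed
        have "dist_dir E j i \<le> diameter V E"
          unfolding diameter_def by (rule Max_ge[OF fin]) (use i j in blast)
        then have "dist_dir E j i \<le> T" using assms(8) V_def by simp
        then show "j \<in> reachN E T i" using d unfolding reachN_def by blast
      qed
    qed
  qed
  define n0 where "n0 = nat \<lceil>real m / real k\<rceil>"
  have "real m / real k \<le> of_int \<lceil>real m / real k\<rceil>" by (rule le_of_int_ceiling)
  also have "\<dots> = real n0" unfolding n0_def using m1 k by simp
  finally have "real m \<le> real n0 * real k" using k by (simp add: field_simps)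
  then have n0k: "m \<le> n0 * k" by (simp flip: of_nat_mult)
  have QP: "Qrec k P n0 = P"
  proof -
    have "Qrec k P n0 \<subseteq> P" "card (Qrec k P n0) = card P"
      using Qrec_props[OF fP, of k n0] cP n0k by auto
    then show ?thesis using fP card_subset_eq by blast
  qed
  have rec: "recovered E k T xt n0 i = P" if "i \<in> V" for i
    using recovered_eq[OF E fV k reach, of xt n0] that QP unfolding P_def f_def by simp
  have sumP: "(\<Sum>p\<in>P. fst p) = (\<Sum>j\<in>V. xt j)"
    unfolding P_def using sum.reindex[OF injf, of fst] by (simp add: f_def)
  define D where "D = (\<lambda>i. (\<Sum>j\<in>in_nbrs E i. r j i) - (\<Sum>j\<in>out_nbrs E i. r i j))"
  have "\<exists>z. xt i = x i + D i + c * of_int z" for i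
  proof -
    obtain z1 where z1: "rmod (D i) c = D i + c * of_int z1" using rmod_decomp by blast
    obtain z2 where z2: "rmod (x i + rmod (D i) c) c = (x i + rmod (D i) c) + c * of_int z2"
      using rmod_decomp by blast
    have "xt i = rmod (x i + rmod (D i) c) c"
      unfolding xt_def perturbed_def D_def c_def by simp
    then have "xt i = x i + D i + c * of_int (z1 + z2)"
      using z1 z2 by (simp add: algebra_simps)
    then show ?thesis by blast
  qed
  then obtain z where z: "\<And>i. xt i = x i + D i + c * of_int (z i)" by metis
  have "(\<Sum>j\<in>V. xt j) = (\<Sum>j\<in>V. x j) + (\<Sum>j\<in>V. D j) + c * of_int (\<Sum>j\<in>V. z j)"
    by (simp add: z sum.distrib sum_distrib_left)
  also have "(\<Sum>j\<in>V. D j) = 0" unfolding D_def by (rule flow_zero[OF E fV])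
  finally have sx: "(\<Sum>j\<in>V. xt j) = (\<Sum>j\<in>V. x j) + c * of_int (\<Sum>j\<in>V. z j)" by simp
  have s0: "0 \<le> (\<Sum>j\<in>V. x j)" using assms(4) V_def by (intro sum_nonneg) auto
  have "(\<Sum>j\<in>V. x j) < (\<Sum>j\<in>V. a)"
    using assms(4) V_def m1 by (intro sum_strict_mono) auto
  then have s1: "(\<Sum>j\<in>V. x j) < c" using cV unfolding c_def by simp
  have rm: "rmod (\<Sum>j\<in>V. xt j) c = (\<Sum>j\<in>V. x j)" by (rule rmod_eq[OF c s0 s1 sx])
  fix i assume i: "i \<in> {1..m}"
  then have iV: "i \<in> V" unfolding V_def .
  show "titan_output m a E k T r x i = (\<Sum>j\<in>{1..m}. x j) / real m"
    unfolding titan_output_def xt_def[symmetric] n0_def[symmetric] c_def[symmetric]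
    using rec[OF iV] sumP rm V_def by simp
qed


end
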